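(* Let $\textbf{F}$ be an IVF on a nonempty subset $\mathcal{X}$ of $\mathbb{R}^n$ that is $gH$-differentiable at $\bar{x}\in\mathcal{X}$, with linear IVF $\textbf{L}_{\bar{x}}$ as in the definition of $gH$-differentiability. Then the $gH$-gradient $\nabla\textbf{F}(\bar{x})$ exists and, for each $d=(d_1,\dots,d_n)^T\in\mathbb{R}^n$, \[\textbf{L}_{\bar{x}}(d)=d^T\odot\nabla\textbf{F}(\bar{x}),\quad\text{where } d^T\odot\nabla\textbf{F}(\bar{x})=\bigoplus_{i=1}^n d_i\odot D_i\textbf{F}(\bar{x}).\]
   Context: $I(\mathbb{R})$: closed bounded intervals $\textbf{A}=[\underline{a},\overline{a}]$ with Moore arithmetic ($\oplus$ endpointwise; $\lambda\odot\textbf{A}=[\lambda\underline{a},\lambda\overline{a}]$ if $\lambda\ge0$, $[\lambda\overline{a},\lambda\underline{a}]$ if $\lambda<0$); $gH$-difference $\textbf{A}\ominus_{gH}\textbf{B}=[\min\{\underline{a}-\underline{b},\overline{a}-\overline{b}\},\max\{\underline{a}-\underline{b},\overline{a}-\overline{b}\}]$; limits of intervals are in the norm $\max\{|\underline{a}|,|\overline{a}|\}$. An IVF is $\textbf{F}(x)=[\underline{f}(x),\overline{f}(x)]$. The $i$-th partial $gH$-derivative $D_i\textbf{F}(\bar{x})$ is the $gH$-derivative $\lim_{h\to0}\frac1h\odot(\textbf{G}_i(\bar{x}_i+h)\ominus_{gH}\textbf{G}_i(\bar{x}_i))$ of $\textbf{G}_i(x_i)=\textbf{F}(\bar{x}_1,\dots,x_i,\dots,\bar{x}_n)$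 at $\bar{x}_i$, when it exists; $\nabla\textbf{F}(\bar{x})=(D_1\textbf{F}(\bar{x}),\dots,D_n\textbf{F}(\bar{x}))^T$ exists when all these exist. An IVF $\textbf{L}:\mathbb{R}^n\to I(\mathbb{R})$ is linear if $\textbf{L}(x)=\bigoplus_{i=1}^n x_i\odot\textbf{L}(e_i)$ for all $x$, $e_i$ the standard basis. $\textbf{F}$ is $gH$-differentiable at $\bar{x}$ if there exist a linear IVF $\textbf{L}_{\bar{x}}:\mathbb{R}^n\to I(\mathbb{R})$, an IVF $\textbf{E}(\textbf{F}(\bar{x});d)$ and $\delta>0$ such that $(\textbf{F}(\bar{x}+d)\ominus_{gH}\textbf{F}(\bar{x}))\ominus_{gH}\textbf{L}_{\bar{x}}(d)=\lVert d\rVert\odot\textbf{E}(\textbf{F}(\bar{x});d)$ for all $d$ with $\lVert d\rVert<\delta$, where $\textbf{E}(\textbf{F}(\bar{x});d)\to\textbf{0}$ as $\lVert d\rVert\to0$. *)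

theory Defs
  imports "HOL-Analysis.Analysis" "HOL-Library.Interval"
begin

text \<open>Closed bounded real intervals are the library type real interval
  (HOL-Library.Interval), with lower/upper endpoints and Moore addition (+),
  neutral element 0 = [0,0]; the big sum is iterated Moore addition.\<close>

definition smult_I :: "real \<Rightarrow> real interval \<Rightarrow> real interval" where
  "smult_I c A = (if c \<ge> 0 then Ivl (c * lower A) (c * upper A)
                  else Ivl (c * upper A) (c * lower A))"

definition gH_minus :: "real interval \<Rightarrow> real interval \<Rightarrow> real interval" where
  "gH_minus A B = Ivl (min (lower A - lower B) (upper A - upper B))
                      (max (lower A - lower B) (upper A - upper B))"

definition I_norm :: "real interval \<Rightarrow> real" where
  "I_norm A = max \<bar>lower A\<bar> \<bar>upper A\<bar>"

definition I_tendsto :: "('a \<Rightarrow> real interval) \<Rightarrow> real interval \<Rightarrow> 'a filter \<Rightarrow> bool" where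
  "I_tendsto f D F \<longleftrightarrow> ((\<lambda>h. I_norm (gH_minus (f h) D)) \<longlongrightarrow> 0) F"

definition has_gH_derivative :: "(real \<Rightarrow> real interval) \<Rightarrow> real \<Rightarrow> real interval \<Rightarrow> bool" where
  "has_gH_derivative G x D \<longleftrightarrow>
     I_tendsto (\<lambda>h. smult_I (1 / h) (gH_minus (G (x + h)) (G x))) D (at 0)"

definition has_partial_gH :: "(real^'n \<Rightarrow> real interval) \<Rightarrow> real^'n \<Rightarrow> 'n \<Rightarrow> real interval \<Rightarrow> bool" where
  "has_partial_gH F xbar i D \<longleftrightarrow>
     has_gH_derivative (\<lambda>t. F (\<chi> j. if j = i then t else xbar $ j)) (xbar $ i) D"

definition linear_IVF :: "(real^'n \<Rightarrow> real interval) \<Rightarrow> bool" where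
  "linear_IVF L \<longleftrightarrow> (\<forall>x. L x = (\<Sum>i\<in>UNIV. smult_I (x $ i) (L (axis i 1))))"

definition gH_differentiable_with :: "(real^'n \<Rightarrow> real interval) \<Rightarrow> real^'n \<Rightarrow> (real^'n \<Rightarrow> real interval) \<Rightarrow> bool" where
  "gH_differentiable_with F xbar L \<longleftrightarrow> linear_IVF L \<and>
     (\<exists>E \<delta>. \<delta> > 0 \<and>
        (\<forall>d. norm d < \<delta> \<longrightarrow>
           gH_minus (gH_minus (F (xbar + d)) (F xbar)) (L d) = smult_I (norm d) (E d)) \<and>
        I_tendsto E 0 (at 0))"

end

theory Submission imports Defs begin
lemma lower_Ivl: "lower (Ivl a b) = min a (b::real)" by (simp add: Ivl.rep_eq lower.rep_eq upper.rep_eq)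
lemma upper_Ivl: "upper (Ivl a b) = (b::real)" by (simp add: Ivl.rep_eq lower.rep_eq upper.rep_eq)
lemma lower_smult: "lower (smult_I c A) = (if c \<ge> 0 then c * lower A else c * upper A)"
  using lower_le_upper[of A]
  by (auto simp: smult_I_def lower_Ivl min_def mult_left_mono mult_left_mono_neg)
lemma upper_smult: "upper (smult_I c A) = (if c \<ge> 0 then c * upper A else c * lower A)"
  by (auto simp: smult_I_def upper_Ivl)
lemma lower_gH: "lower (gH_minus A B) = min (lower A - lower B) (upper A - upper B)"
  by (simp add: gH_minus_def lower_Ivl)
lemma upper_gH: "upper (gH_minus A B) = max (lower A - lower B) (upper A - upper B)"
  by (simp add: gH_minus_def upper_Ivl)
lemma norm_gH: "I_norm (gH_minus A B) = max \<bar>lower A - lower B\<bar> \<bar>upper A - upper B\<bar>"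
  unfolding I_norm_def lower_gH upper_gH by (auto simp: min_def max_def)
lemma norm_gH_smult: "I_norm (gH_minus (smult_I c A) (smult_I c B)) = \<bar>c\<bar> * I_norm (gH_minus A B)"
  unfolding norm_gH lower_smult upper_smult
  by (auto simp: abs_mult max_mult_distrib_left right_diff_distrib[symmetric] max.commute)
lemma smult_smult: "smult_I a (smult_I b A) = smult_I (a*b) A"
  by (rule interval_eqI) (auto simp: lower_smult upper_smult mult_nonneg_nonneg zero_le_mult_iff)
lemma smult_one: "smult_I 1 A = A"
  by (rule interval_eqI) (auto simp: lower_smult upper_smult)
lemma smult_zero: "smult_I 0 A = 0"
  by (rule interval_eqI) (auto simp: lower_smult upper_smult)
lemma norm_smult: "I_norm (smult_I c A) = \<bar>c\<bar> * I_norm A"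
  unfolding I_norm_def lower_smult upper_smult by (auto simp: abs_mult max_mult_distrib_left max.commute)
lemma gH_zero: "gH_minus A 0 = A"
  by (rule interval_eqI) (auto simp: lower_gH upper_gH)
lemma smult_inv_cancel: "h \<noteq> 0 \<Longrightarrow> smult_I (1/h) (smult_I h B) = B"
  by (simp add: smult_smult smult_one)

lemma L_axis:
  assumes "linear_IVF L"
  shows "L (h *\<^sub>R axis i 1) = smult_I h (L (axis i 1))"
proof -
  have "L (h *\<^sub>R axis i 1) = (\<Sum>j\<in>UNIV. smult_I ((h *\<^sub>R axis i 1) $ j) (L (axis j 1)))"
    using assms unfolding linear_IVF_def by blast
  also have "\<dots> = (\<Sum>j\<in>UNIV. if j = i then smult_I h (L (axis i 1)) else 0)"
    by (rule sum.cong) (auto simp: axis_def smult_zero)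
  also have "\<dots> = smult_I h (L (axis i 1))" by simp
  finally show ?thesis .
qed

theorem theorem3p1:
  fixes F :: "real^'n \<Rightarrow> real interval"
    and X :: "(real^'n) set"
    and xbar :: "real^'n"
    and L :: "real^'n \<Rightarrow> real interval"
  assumes "X \<noteq> {}"
    and "xbar \<in> X"
    and "gH_differentiable_with F xbar L"
  shows "\<exists>DF :: 'n \<Rightarrow> real interval.
           (\<forall>i. has_partial_gH F xbar i (DF i)) \<and>
           (\<forall>d. L d = (\<Sum>i\<in>UNIV. smult_I (d $ i) (DF i)))"
proof -
  have lin: "linear_IVF L" using assms(3) unfolding gH_differentiable_with_def by blast
  obtain E \<delta> where dpos: "\<delta> > 0"
    and eq: "\<And>d. norm d < \<delta> \<Longrightarrow>
           gH_minus (gH_minus (F (xbar + d)) (F xbar)) (L d) = smult_I (norm d) (E d)"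
    and Et: "I_tendsto E 0 (at 0)"
    using assms(3) unfolding gH_differentiable_with_def by blast
  have Et': "((\<lambda>d. I_norm (E d)) \<longlongrightarrow> 0) (at 0)"
    using Et unfolding I_tendsto_def gH_zero .
  have "has_partial_gH F xbar i (L (axis i 1))" for i
  proof -
    define e :: "real^'n" where "e = axis i 1"
    define B where "B = L e"
    have ne: "norm e = 1" by (simp add: e_def)
    have fl: "filterlim (\<lambda>h::real. h *\<^sub>R e) (at 0) (at 0)"
    proof -
      have t: "((\<lambda>h::real. h *\<^sub>R e) \<longlongrightarrow> 0) (at 0)"
        by (intro tendsto_eq_intros) auto
      have ev: "\<forall>\<^sub>F h in at (0::real). h *\<^sub>R e \<noteq> 0"
        using ne by (auto simp: eventually_at_filter)
      show ?thesis using t ev by (simp add: filterlim_at)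
    qed
    have lim: "((\<lambda>h. I_norm (E (h *\<^sub>R e))) \<longlongrightarrow> 0) (at (0::real))"
      using filterlim_compose[OF Et' fl] by (simp add: o_def)
    have ev: "\<forall>\<^sub>F h in at (0::real).
        I_norm (E (h *\<^sub>R e)) =
        I_norm (gH_minus (smult_I (1 / h)
          (gH_minus (F (\<chi> j. if j = i then xbar $ i + h else xbar $ j))
                    (F (\<chi> j. if j = i then xbar $ i else xbar $ j)))) B)"
    proof -
      have "\<forall>\<^sub>F h in at (0::real). h \<noteq> 0 \<and> dist h 0 < \<delta>"
        using dpos by (auto simp: eventually_at)
      then show ?thesis
      proof (rule eventually_mono)
        fix h :: real assume h: "h \<noteq> 0 \<and> dist h 0 < \<delta>"
        have v1: "(\<chi> j. if j = i then xbar $ i + h else xbar $ j) = xbar + h *\<^sub>R e"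
          by (auto simp: vec_eq_iff e_def axis_def)
        have v2: "(\<chi> j. if j = i then xbar $ i else xbar $ j) = xbar"
          by (auto simp: vec_eq_iff)
        have nd: "norm (h *\<^sub>R e) = \<bar>h\<bar>" using ne by simp
        define A where "A = gH_minus (F (xbar + h *\<^sub>R e)) (F xbar)"
        have e1: "gH_minus A (smult_I h B) = smult_I \<bar>h\<bar> (E (h *\<^sub>R e))"
          using eq[of "h *\<^sub>R e"] h nd L_axis[OF lin, of h i]
          by (simp add: A_def B_def e_def)
        have "I_norm (gH_minus (smult_I (1 / h) A) B)
            = I_norm (gH_minus (smult_I (1 / h) A) (smult_I (1/h) (smult_I h B)))"
          using h by (simp add: smult_inv_cancel)
        also have "\<dots> = \<bar>1/h\<bar> * I_norm (gH_minus A (smult_I h B))"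
          by (rule norm_gH_smult)
        also have "\<dots> = I_norm (E (h *\<^sub>R e))"
          using h by (simp add: e1 norm_smult)
        finally show "I_norm (E (h *\<^sub>R e)) =
        I_norm (gH_minus (smult_I (1 / h)
          (gH_minus (F (\<chi> j. if j = i then xbar $ i + h else xbar $ j))
                    (F (\<chi> j. if j = i then xbar $ i else xbar $ j)))) B)"
          unfolding v1 v2 A_def by simp
      qed
    qed
    show ?thesis
      unfolding has_partial_gH_def has_gH_derivative_def I_tendsto_def
      using tendsto_cong[OF ev] lim by (simp add: B_def e_def)
  qed
  moreover have "\<forall>d. L d = (\<Sum>i\<in>UNIV. smult_I (d $ i) (L (axis i 1)))"
    using lin unfolding linear_IVF_def by blast
  ultimately show ?thesis by (intro exI[of _ "\<lambda>i. L (axis i 1)"]) blast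
qed

end
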